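(* Let $f(x)$ be a formal power series with zero constant term and positive coefficient of $x$. If the power series $x/f(x)=\sum_{n\ge0}c_nx^n$ is alternating, i.e. $(-1)^nc_n\ge0$ for all $n\ge0$, then the compositional inverse $f^{-1}(x)=\sum_{n\ge1}e_nx^n$ satisfies $(-1)^{n-1}e_n\ge0$ for all $n\ge1$.
   Context: The compositional inverse $f^{-1}(x)$ is the unique power series with zero constant term satisfying $f(f^{-1}(x))=f^{-1}(f(x))=x$. *)

theory Defs
  imports "HOL-Computational_Algebra.Formal_Power_Series"
begin

end

theory Submission
  imports Defs
begin

unbundle fps_syntax

lemma pow_sign:
  fixes a :: "real fps"
  assumes "\<And>j. j \<le> m \<Longrightarrow> (-1) ^ (j+1) * a $ j \<ge> 0"
  shows "(-1) ^ (m+k) * (a^k) $ m \<ge> 0"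
  using assms
proof (induction k arbitrary: m)
  case 0
  then show ?case by simp
next
  case (Suc k)
  have "(-1) ^ (m + Suc k) * (a ^ Suc k) $ m
      = (\<Sum>i=0..m. ((-1)^(i+1) * a $ i) * ((-1)^(m-i+k) * (a^k) $ (m-i)))"
    unfolding power_Suc fps_mult_nth sum_distrib_left
  proof (rule sum.cong[OF refl])
    fix i assume "i \<in> {0..m}"
    hence "m + Suc k = (i+1) + (m-i+k)" by auto
    hence "(-1::real) ^ (m + Suc k) = (-1)^(i+1) * (-1)^(m-i+k)"
      by (simp only: power_add)
    thus "(-1) ^ (m + Suc k) * (a $ i * a ^ k $ (m - i)) =
         (-1) ^ (i + 1) * a $ i * ((-1) ^ (m - i + k) * a ^ k $ (m - i))"
      by simp
  qed
  also have "\<dots> \<ge> 0"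
  proof (rule sum_nonneg, rule mult_nonneg_nonneg)
    fix i assume i: "i \<in> {0..m}"
    show "0 \<le> (-1::real) ^ (i+1) * a $ i" using Suc.prems i by auto
    show "0 \<le> (-1::real) ^ (m-i+k) * (a^k) $ (m-i)"
      by (rule Suc.IH) (use Suc.prems in auto)
  qed
  finally show ?case .
qed

theorem claim6p1:
  fixes f :: "real fps"
  assumes "fps_nth f 0 = 0"
    and "fps_nth f 1 > 0"
    and "\<forall>n. (-1) ^ n * fps_nth (fps_X / f) n \<ge> 0"
  shows "\<forall>n\<ge>1. (-1) ^ (n - 1) * fps_nth (fps_inv f) n \<ge> 0"
proof -
  define g where "g = fps_X / f"
  define e where "e = fps_inv f"
  have f0: "f \<noteq> 0" using assms(2) by auto
  have sf: "subdegree f = 1"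
    by (rule subdegreeI) (use assms in auto)
  have gf: "g * f = fps_X"
    unfolding g_def by (rule fps_times_divide_eq[OF f0]) (simp add: sf)
  have e0: "e$0 = 0" by (simp add: e_def fps_inv_def)
  have fe: "f oo e = fps_X" unfolding e_def
    by (rule fps_inv_right) (use assms in auto)
  have "(g oo e) * fps_X = e"
  proof -
    have "(g * f) oo e = (g oo e) * (f oo e)" by (rule fps_compose_mult_distrib[OF e0])
    thus ?thesis using gf fe e0 by simp
  qed
  hence en: "e $ n = (g oo e) $ (n-1)" if "n \<ge> 1" for n
    using that by (metis fps_X_mult_right_nth not_one_le_zero)
  have main: "(-1) ^ (n+1) * e $ n \<ge> 0" for n
  proof (induction n rule: less_induct)
    case (less n)
    show ?case
    proof (cases "n = 0")
      case True then show ?thesis by (simp add: e0)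
    next
      case False
      have en1: "e $ n = (g oo e) $ (n-1)" using en False by auto
      have "(-1) ^ (n+1) * e $ n = (\<Sum>k=0..n-1. ((-1)^k * g $ k) * ((-1)^(n-1+k) * (e^k) $ (n-1)))"
        unfolding en1 fps_compose_nth sum_distrib_left
      proof (intro sum.cong[OF refl])
        fix k assume "k \<in> {0..n-1}"
        have "k + (n-1+k) + 2 = (n+1) + 2*k" using False by auto
        have "(-1::real)^(k + (n-1+k)) = (-1)^(k + (n-1+k) + 2)" by (simp only: power_add) simp
        also have "\<dots> = (-1)^((n+1) + 2*k)" by (simp only: \<open>k + (n-1+k) + 2 = (n+1) + 2*k\<close>)
        also have "\<dots> = (-1)^(n+1)" by (simp only: power_add power_mult) simp
        finally have "(-1::real)^(k + (n-1+k)) = (-1)^(n+1)" .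
        note sg = this
        have "(-1::real) ^ k * g $ k * ((-1) ^ (n - 1 + k) * e ^ k $ (n - 1))
            = ((-1) ^ k * (-1) ^ (n - 1 + k)) * (g $ k * e ^ k $ (n - 1))"
          by (simp only: mult_ac)
        also have "\<dots> = (-1)^(n+1) * (g $ k * e ^ k $ (n - 1))"
          by (simp only: sg power_add[symmetric])
        finally show "(-1) ^ (n + 1) * (g $ k * e ^ k $ (n - 1)) =
            (-1) ^ k * g $ k * ((-1) ^ (n - 1 + k) * e ^ k $ (n - 1))" by simp
      qed
      also have "\<dots> \<ge> 0"
      proof (rule sum_nonneg, rule mult_nonneg_nonneg)
        fix k show "0 \<le> (-1::real) ^ k * g $ k" using assms(3) g_def by auto
        show "0 \<le> (-1::real) ^ (n - 1 + k) * e ^ k $ (n - 1)"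
          by (rule pow_sign) (use less False in auto)
      qed
      finally show ?thesis .
    qed
  qed
  show ?thesis
  proof (intro allI impI)
    fix n :: nat assume "n \<ge> 1"
    hence "n + 1 = (n-1) + 2" by auto
    hence "(-1::real)^(n+1) = (-1)^(n-1)" by (simp only: power_add) simp
    thus "(-1) ^ (n - 1) * fps_nth (fps_inv f) n \<ge> 0" using main[of n] e_def by simp
  qed
qed

end
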